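(* Let $\boldsymbol{Y}_t$ be an $n\times 1$ vector of observed variables generated by the structural vector moving average model $$\boldsymbol{Y}_t=\boldsymbol{\Theta}(L)\boldsymbol{\varepsilon}_t=\sum_{j=0}^{\infty}\boldsymbol{\Theta}_j\boldsymbol{\varepsilon}_{t-j},$$ where $\boldsymbol{\varepsilon}_t=(\varepsilon_{1,t},\dots,\varepsilon_{m,t})'$ is an $m\times1$ vector of unobserved structural shocks with $E[\boldsymbol{\varepsilon}_t]=0$, $E[\boldsymbol{\varepsilon}_t\boldsymbol{\varepsilon}_t']>0$ and mutually uncorrelated components, and each $\boldsymbol{\Theta}_h$ is an $n\times m$ matrix. Let $x_t$ be the first element and $y_t$ the last element of $\boldsymbol{Y}_t$, let $\theta_{h,xs}$ denote the $(1,s)$-th element and $\theta_{h,ys}$ the $(n,s)$-th element of $\boldsymbol{\Theta}_h$. Fix $1\le S\le m$, let $\xi_t=\sum_{s=1}^{S}\varepsilon_{s,t}$, and assume the unit effect normalization $\theta_{0,xs}=1$ for all $s=1,\dots,S$. Let $z_t$ be a random variable satisfying: (i) $E[z_t\xi_t]\neq 0$; (ii) $E[z_t\varepsilon_{s,t}]=0$ for all $s=S+1,\dots,m$; (iii) $E[z_t\boldsymbol{\varepsilon}_{t+j}]=0$ for all $j\neq 0$. Write $\alpha_s=E[z_t\varepsilon_{s,t}]$ for $s=1,\dots,S$. Then for every $h=0,1,2,\dots$, $$\beta_h\equiv\frac{Cov(y_{t+h},z_t)}{Cov(x_t,z_t)}=\sum_{s=1}^{S}w_s\theta_{h,ys},\qquad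 w_s=\frac{\alpha_s}{\sum_{s'=1}^{S}\alpha_{s'}}.$$ Furthermore, if in addition either $\alpha_s\ge 0$ for all $s=1,\dots,S$ or $\alpha_s\le 0$ for all $s=1,\dots,S$, then $w_s\ge 0$ for all $s=1,\dots,S$.
   Context: All moments involved are assumed finite and the moving average series is assumed to converge so that covariances can be computed term by term. $L$ is the lag operator and $\boldsymbol{\Theta}(L)=\boldsymbol{\Theta}_0+\boldsymbol{\Theta}_1L+\boldsymbol{\Theta}_2L^2+\cdots$. *)

theory Defs
  imports "HOL-Probability.Probability"
begin

definition cov :: "'a measure \<Rightarrow> ('a \<Rightarrow> real) \<Rightarrow> ('a \<Rightarrow> real) \<Rightarrow> real" where
  "cov M X Z = integral\<^sup>L M (\<lambda>\<omega>. (X \<omega> - integral\<^sup>L M X) * (Z \<omega> - integral\<^sup>L M Z))"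

end

theory Submission
  imports Defs
begin

theorem proposition1:
  fixes M :: "'a measure"
    and n m S :: nat
    and t :: int
    and \<epsilon> :: "int \<Rightarrow> nat \<Rightarrow> 'a \<Rightarrow> real"
    and \<Theta> :: "nat \<Rightarrow> nat \<Rightarrow> nat \<Rightarrow> real"
    and Y :: "int \<Rightarrow> nat \<Rightarrow> 'a \<Rightarrow> real"
    and z :: "'a \<Rightarrow> real"
  assumes P: "prob_space M"
    and n_pos: "1 \<le> n"
    and S_range: "1 \<le> S" "S \<le> m"
    (* shocks: measurable, finite second moments, mean zero *)
    and eps_meas: "\<And>t' s. \<epsilon> t' s \<in> borel_measurable M"
    and eps_int: "\<And>t' s. integrable M (\<epsilon> t' s)"
    and eps_sq: "\<And>t' s t'' s'. integrable M (\<lambda>\<omega>. \<epsilon> t' s \<omega> * \<epsilon> t'' s' \<omega>)"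
    and eps_mean: "\<And>t' s. s \<in> {1..m} \<Longrightarrow> integral\<^sup>L M (\<epsilon> t' s) = 0"
    (* E[eps_t eps_t'] positive definite *)
    and eps_pd: "\<And>t' c. (\<exists>s\<in>{1..m}. c s \<noteq> 0) \<Longrightarrow>
        integral\<^sup>L M (\<lambda>\<omega>. (\<Sum>s=1..m. c s * \<epsilon> t' s \<omega>)\<^sup>2) > 0"
    (* mutually uncorrelated components *)
    and eps_uncorr: "\<And>t' s s'. s \<in> {1..m} \<Longrightarrow> s' \<in> {1..m} \<Longrightarrow> s \<noteq> s' \<Longrightarrow>
        integral\<^sup>L M (\<lambda>\<omega>. \<epsilon> t' s \<omega> * \<epsilon> t' s' \<omega>) = 0"
    (* the structural VMA model, with pointwise convergent series *)
    and Y_summable: "\<And>t' i \<omega>. i \<in> {1..n} \<Longrightarrow>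
        summable (\<lambda>j. \<Sum>s=1..m. \<Theta> j i s * \<epsilon> (t' - int j) s \<omega>)"
    and Y_def: "\<And>t' i \<omega>. i \<in> {1..n} \<Longrightarrow>
        Y t' i \<omega> = (\<Sum>j. \<Sum>s=1..m. \<Theta> j i s * \<epsilon> (t' - int j) s \<omega>)"
    (* the instrument: measurable, finite moments *)
    and z_meas: "z \<in> borel_measurable M"
    and z_int: "integrable M z"
    and z_sq: "integrable M (\<lambda>\<omega>. (z \<omega>)\<^sup>2)"
    and z_eps_int: "\<And>t' s. integrable M (\<lambda>\<omega>. z \<omega> * \<epsilon> t' s \<omega>)"
    and Y_int: "\<And>t' i. i \<in> {1..n} \<Longrightarrow> integrable M (Y t' i)"
    and Y_sq: "\<And>t' i. i \<in> {1..n} \<Longrightarrow> integrable M (\<lambda>\<omega>. (Y t' i \<omega>)\<^sup>2)"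
    and zY_int: "\<And>t' i. i \<in> {1..n} \<Longrightarrow> integrable M (\<lambda>\<omega>. z \<omega> * Y t' i \<omega>)"
    (* moments of the moving average can be computed term by term *)
    and Y_mean_termwise: "\<And>t' i. i \<in> {1..n} \<Longrightarrow>
        (\<lambda>j. integral\<^sup>L M (\<lambda>\<omega>. \<Sum>s=1..m. \<Theta> j i s * \<epsilon> (t' - int j) s \<omega>))
          sums integral\<^sup>L M (Y t' i)"
    and zY_termwise: "\<And>t' i. i \<in> {1..n} \<Longrightarrow>
        (\<lambda>j. integral\<^sup>L M (\<lambda>\<omega>. z \<omega> * (\<Sum>s=1..m. \<Theta> j i s * \<epsilon> (t' - int j) s \<omega>)))
          sums integral\<^sup>L M (\<lambda>\<omega>. z \<omega> * Y t' i \<omega>)"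
    (* unit effect normalization *)
    and unit_effect: "\<And>s. s \<in> {1..S} \<Longrightarrow> \<Theta> 0 1 s = 1"
    (* instrument conditions (i)-(iii) *)
    and relevance: "integral\<^sup>L M (\<lambda>\<omega>. z \<omega> * (\<Sum>s=1..S. \<epsilon> t s \<omega>)) \<noteq> 0"
    and exog: "\<And>s. s \<in> {S+1..m} \<Longrightarrow> integral\<^sup>L M (\<lambda>\<omega>. z \<omega> * \<epsilon> t s \<omega>) = 0"
    and lead_lag: "\<And>j s. j \<noteq> 0 \<Longrightarrow> s \<in> {1..m} \<Longrightarrow>
        integral\<^sup>L M (\<lambda>\<omega>. z \<omega> * \<epsilon> (t + j) s \<omega>) = 0"
  shows "(\<forall>h::nat.
            cov M (Y (t + int h) n) z / cov M (Y t 1) z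
              = (\<Sum>s=1..S. (integral\<^sup>L M (\<lambda>\<omega>. z \<omega> * \<epsilon> t s \<omega>)
                  / (\<Sum>s'=1..S. integral\<^sup>L M (\<lambda>\<omega>. z \<omega> * \<epsilon> t s' \<omega>))) * \<Theta> h n s))
       \<and> (((\<forall>s\<in>{1..S}. integral\<^sup>L M (\<lambda>\<omega>. z \<omega> * \<epsilon> t s \<omega>) \<ge> 0)
            \<or> (\<forall>s\<in>{1..S}. integral\<^sup>L M (\<lambda>\<omega>. z \<omega> * \<epsilon> t s \<omega>) \<le> 0))
          \<longrightarrow> (\<forall>s\<in>{1..S}. integral\<^sup>L M (\<lambda>\<omega>. z \<omega> * \<epsilon> t s \<omega>)
                  / (\<Sum>s'=1..S. integral\<^sup>L M (\<lambda>\<omega>. z \<omega> * \<epsilon> t s' \<omega>)) \<ge> 0))"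
  proof -
  interpret prob_space M by (rule P)
  define \<alpha> where "\<alpha> s = integral\<^sup>L M (\<lambda>\<omega>. z \<omega> * \<epsilon> t s \<omega>)" for s
  define A where "A = (\<Sum>s'=1..S. \<alpha> s')"
  have trm: "integral\<^sup>L M (\<lambda>\<omega>. z \<omega> * (\<Sum>s=1..m. \<Theta> j i s * \<epsilon> t'' s \<omega>))
      = (\<Sum>s=1..m. \<Theta> j i s * integral\<^sup>L M (\<lambda>\<omega>. z \<omega> * \<epsilon> t'' s \<omega>))" for j i t''
  proof -
    have "(\<lambda>\<omega>. z \<omega> * (\<Sum>s=1..m. \<Theta> j i s * \<epsilon> t'' s \<omega>))
        = (\<lambda>\<omega>. \<Sum>s=1..m. \<Theta> j i s * (z \<omega> * \<epsilon> t'' s \<omega>))"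
      by (simp add: sum_distrib_left mult.left_commute)
    then show ?thesis
      using z_eps_int by (simp add: integral_sum)
  qed
  have mterm: "integral\<^sup>L M (\<lambda>\<omega>. \<Sum>s=1..m. \<Theta> j i s * \<epsilon> t'' s \<omega>) = 0" for j i t''
    using eps_int eps_mean by (simp add: integral_sum)
  have EY: "integral\<^sup>L M (Y t' i) = 0" if "i \<in> {1..n}" for t' i
  proof -
    have "(\<lambda>j. 0::real) sums integral\<^sup>L M (Y t' i)"
      using Y_mean_termwise[OF that, of t'] by (simp only: mterm)
    from sums_unique2[OF this sums_zero] show ?thesis by simp
  qed
  have covE: "cov M (Y t' i) z = integral\<^sup>L M (\<lambda>\<omega>. z \<omega> * Y t' i \<omega>)" if "i \<in> {1..n}" for t' i
  proof -
    have "cov M (Y t' i) z = integral\<^sup>L M (\<lambda>\<omega>. z \<omega> * Y t' i \<omega> - integral\<^sup>L M z * Y t' i \<omega>)"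
      unfolding cov_def using EY[OF that] by (simp add: algebra_simps)
    also have "\<dots> = integral\<^sup>L M (\<lambda>\<omega>. z \<omega> * Y t' i \<omega>)"
      using zY_int[OF that] Y_int[OF that] EY[OF that] by simp
    finally show ?thesis .
  qed
  have zY: "integral\<^sup>L M (\<lambda>\<omega>. z \<omega> * Y (t + int h) i \<omega>) = (\<Sum>s=1..m. \<Theta> h i s * \<alpha> s)"
    if "i \<in> {1..n}" for h i
  proof -
    have "(\<lambda>j. integral\<^sup>L M (\<lambda>\<omega>. z \<omega> * (\<Sum>s=1..m. \<Theta> j i s * \<epsilon> (t + int h - int j) s \<omega>)))
        = (\<lambda>j. if j = h then (\<Sum>s=1..m. \<Theta> h i s * \<alpha> s) else 0)"
    proof
      fix j
      show "integral\<^sup>L M (\<lambda>\<omega>. z \<omega> * (\<Sum>s=1..m. \<Theta> j i s * \<epsilon> (t + int h - int j) s \<omega>))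
        = (if j = h then (\<Sum>s=1..m. \<Theta> h i s * \<alpha> s) else 0)"
      proof (cases "j = h")
        case True
        then show ?thesis using trm[of h i t] by (simp add: \<alpha>_def)
      next
        case False
        have eq: "t + int h - int j = t + (int h - int j)" by simp
        have neq: "int h - int j \<noteq> 0" using False by simp
        have "\<And>s. s \<in> {1..m} \<Longrightarrow>
            integral\<^sup>L M (\<lambda>\<omega>. z \<omega> * \<epsilon> (t + int h - int j) s \<omega>) = 0"
          unfolding eq by (rule lead_lag[OF neq])
        then show ?thesis using False trm[of j i "t + int h - int j"] by simp
      qed
    qed
    note eqf = this
    have "(\<lambda>j. if j = h then (\<Sum>s=1..m. \<Theta> h i s * \<alpha> s) else 0) sums (\<Sum>s=1..m. \<Theta> h i s * \<alpha> s)"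
      by (rule sums_single)
    moreover have "(\<lambda>j. if j = h then (\<Sum>s=1..m. \<Theta> h i s * \<alpha> s) else 0) sums integral\<^sup>L M (\<lambda>\<omega>. z \<omega> * Y (t + int h) i \<omega>)"
      using zY_termwise[OF that, of "t + int h"] unfolding eqf .
    ultimately show ?thesis by (simp add: sums_iff)
  qed
  have restrict: "(\<Sum>s=1..m. \<Theta> h i s * \<alpha> s) = (\<Sum>s=1..S. \<Theta> h i s * \<alpha> s)" for h i
  proof -
    have "{1..m} = {1..S} \<union> {S+1..m}" using S_range by auto
    then have "(\<Sum>s=1..m. \<Theta> h i s * \<alpha> s) = (\<Sum>s=1..S. \<Theta> h i s * \<alpha> s) + (\<Sum>s=S+1..m. \<Theta> h i s * \<alpha> s)"
      by (simp add: sum.union_disjoint)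
    also have "(\<Sum>s=S+1..m. \<Theta> h i s * \<alpha> s) = 0"
      using exog by (simp add: \<alpha>_def)
    finally show ?thesis by simp
  qed
  have n_in: "n \<in> {1..n}" and one_in: "1 \<in> {1..n}" using n_pos by auto
  have Adef: "A = integral\<^sup>L M (\<lambda>\<omega>. z \<omega> * (\<Sum>s=1..S. \<epsilon> t s \<omega>))"
  proof -
    have "(\<lambda>\<omega>. z \<omega> * (\<Sum>s=1..S. \<epsilon> t s \<omega>)) = (\<lambda>\<omega>. \<Sum>s=1..S. z \<omega> * \<epsilon> t s \<omega>)"
      by (simp add: sum_distrib_left)
    then show ?thesis using z_eps_int by (simp add: A_def \<alpha>_def integral_sum)
  qed
  have A0: "A \<noteq> 0" using relevance Adef by simp
  have cov1: "cov M (Y t 1) z = A"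
  proof -
    have "cov M (Y t 1) z = (\<Sum>s=1..S. \<Theta> 0 1 s * \<alpha> s)"
      using covE[OF one_in] zY[OF one_in, of 0] restrict by simp
    also have "\<dots> = A" unfolding A_def using unit_effect by simp
    finally show ?thesis .
  qed
  have part1: "cov M (Y (t + int h) n) z / cov M (Y t 1) z = (\<Sum>s=1..S. (\<alpha> s / A) * \<Theta> h n s)" for h
  proof -
    have "cov M (Y (t + int h) n) z = (\<Sum>s=1..S. \<Theta> h n s * \<alpha> s)"
      using covE[OF n_in] zY[OF n_in] restrict by simp
    then show ?thesis using cov1 by (simp add: sum_divide_distrib mult.commute)
  qed
  have part2: "\<alpha> s / A \<ge> 0" if "s \<in> {1..S}"
    and h: "(\<forall>s\<in>{1..S}. \<alpha> s \<ge> 0) \<or> (\<forall>s\<in>{1..S}. \<alpha> s \<le> 0)" for s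
    using h
  proof
    assume a: "\<forall>s\<in>{1..S}. \<alpha> s \<ge> 0"
    then have "A \<ge> 0" unfolding A_def using a by (intro sum_nonneg) auto
    then show ?thesis using a that by simp
  next
    assume a: "\<forall>s\<in>{1..S}. \<alpha> s \<le> 0"
    then have "A \<le> 0" unfolding A_def using a by (intro sum_nonpos) auto
    then show ?thesis using a that by (simp add: divide_nonpos_nonpos)
  qed
  show ?thesis
    unfolding \<alpha>_def[symmetric] A_def[symmetric]
    using part1 part2 by blast
qed


end
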